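(* For every $(t,h)\in[0,T)\times\mathbb{R}_+$, the map $z\mapsto\widehat J(t,z,h)$ is non-decreasing on $\mathbb{R}_+$.
   Context: Fix constants $T>0$, $r>0$, $\mu\in\mathbb{R}$, $\sigma>0$, $\rho>0$, $m^0\ge 0$, $m^1\ge 0$, $\kappa>0$, $\delta>0$, $\alpha\in(0,1)$, $I>0$ and a number $f(I)>0$. Write $\mathbb{R}_+=(0,\infty)$, $\mathcal{O}=[0,T]\times\mathbb{R}_+^2$, $\theta=(\mu-r)/\sigma$. Let $(\Omega,\mathcal{F},\mathbb{F},\mathbb{P})$ be a complete filtered probability space satisfying the usual conditions, carrying a standard $\mathbb{F}$-Brownian motion $B$. Let $\widehat u(z,h)=(1-\alpha)(z/\alpha)^{\alpha/(\alpha-1)}h$. For $(t,z,h)\in\mathcal{O}$ and $s\in[t,T]$ let $H^2_s=he^{-\delta(s-t)}+\frac{f(I)}{\delta}(1-e^{-\delta(s-t)})$, $M^{H^2}_s=m^0+m^1(H^2_s)^{-\kappa}$, and let $Z^2$ solve $dZ^2_s=(\rho-r+M^{H^2}_s)Z^2_s\,ds-\theta Z^2_s\,dB_s$, $Z^2_t=z$. Define $W(t,z,h)=\mathbb{E}\big[\int_t^T e^{-\int_t^s(\rho+M^{H^2}_u)du}\,\widehat u(Z^2_s,H^2_s)\,ds\big]$; subscripts denote partial derivatives. For $z,h>0$ and $s\ge0$ let $H^1_s=he^{-\delta s}$, $M^{H^1}_s=m^0+m^1(H^1_s)^{-\kappa}$ and $Z^1_s=z\exp\big(-(r+\tfrac12\theta^2)s-\theta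 B_s+\int_0^s(\rho+M^{H^1}_u)du\big)$, with $\mathbb{E}_{z,h}$ the corresponding expectation. For $(t,z,h)\in\mathcal{O}$, $\widehat J(t,z,h)=\sup_{0\le\tau\le T-t}\mathbb{E}_{z,h}\Big[\int_0^\tau\Big(Iz\,e^{-rs-\theta B_s-\frac12\theta^2 s}-e^{-\int_0^s(\rho+M^{H^1}_u)du}f(I)W_h(t+s,Z^1_s,H^1_s)\Big)ds\Big]$ over $\mathbb{F}$-stopping times with values in $[0,T-t]$. *)

theory Defs
  imports "HOL-Probability.Probability"
begin

definition std_BM_setting :: "'a measure \<Rightarrow> (real \<Rightarrow> 'a measure) \<Rightarrow> (real \<Rightarrow> 'a \<Rightarrow> real) \<Rightarrow> bool" where
  "std_BM_setting M F B \<longleftrightarrow>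
     prob_space M \<and> complete_measure M \<and>
     filtration (space M) F \<and> (\<forall>t. sets (F t) \<subseteq> sets M) \<and>
     \<comment> \<open>usual conditions: completeness of F_0 and right-continuity\<close>
     null_sets M \<subseteq> sets (F 0) \<and>
     (\<forall>t. sets (F t) = (\<Inter>u\<in>{t<..}. sets (F u))) \<and>
     \<comment> \<open>B is adapted, starts at 0 and has continuous paths\<close>
     (\<forall>t\<ge>0. B t \<in> borel_measurable (F t)) \<and>
     (\<forall>\<omega>\<in>space M. B 0 \<omega> = 0 \<and> continuous_on {0..} (\<lambda>t. B t \<omega>)) \<and>
     \<comment> \<open>increments are centred Gaussian with variance t - s, independent of F_s\<close>
     (\<forall>s t. 0 \<le> s \<and> s < t \<longrightarrow>
        distributed M lborel (\<lambda>\<omega>. B t \<omega> - B s \<omega>) (normal_density 0 (sqrt (t - s))) \<and>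
        (\<forall>A\<in>sets (F s). \<forall>C\<in>sets borel.
           measure M (A \<inter> ((\<lambda>\<omega>. B t \<omega> - B s \<omega>) -` C \<inter> space M))
             = measure M A * measure M ((\<lambda>\<omega>. B t \<omega> - B s \<omega>) -` C \<inter> space M)))"

definition theta :: "real \<Rightarrow> real \<Rightarrow> real \<Rightarrow> real" where
  "theta r \<mu> \<sigma> = (\<mu> - r) / \<sigma>"

definition u_hat :: "real \<Rightarrow> real \<Rightarrow> real \<Rightarrow> real" where
  "u_hat \<alpha> z h = (1 - \<alpha>) * (z / \<alpha>) powr (\<alpha> / (\<alpha> - 1)) * h"

definition MH :: "real \<Rightarrow> real \<Rightarrow> real \<Rightarrow> real \<Rightarrow> real" where
  "MH m0 m1 \<kappa> x = m0 + m1 * x powr (- \<kappa>)"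

definition H2 :: "real \<Rightarrow> real \<Rightarrow> real \<Rightarrow> real \<Rightarrow> real \<Rightarrow> real" where
  "H2 \<delta> fI t h s = h * exp (- \<delta> * (s - t)) + fI / \<delta> * (1 - exp (- \<delta> * (s - t)))"

text \<open>Z^2: the (explicit, pathwise) solution of
  dZ = (rho - r + M^{H^2}) Z ds - theta Z dB, Z_t = z.\<close>
definition Z2 :: "real \<Rightarrow> real \<Rightarrow> real \<Rightarrow> real \<Rightarrow> real \<Rightarrow> real \<Rightarrow> real \<Rightarrow> real \<Rightarrow> real
    \<Rightarrow> (real \<Rightarrow> 'a \<Rightarrow> real) \<Rightarrow> real \<Rightarrow> real \<Rightarrow> real \<Rightarrow> real \<Rightarrow> 'a \<Rightarrow> real" where
  "Z2 r \<mu> \<sigma> \<rho> m0 m1 \<kappa> \<delta> fI B t z h s \<omega> =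
     z * exp (integral {t..s} (\<lambda>u. \<rho> - r + MH m0 m1 \<kappa> (H2 \<delta> fI t h u))
              - (theta r \<mu> \<sigma>)\<^sup>2 / 2 * (s - t) - theta r \<mu> \<sigma> * (B s \<omega> - B t \<omega>))"

definition W :: "'a measure \<Rightarrow> (real \<Rightarrow> 'a \<Rightarrow> real) \<Rightarrow> real \<Rightarrow> real \<Rightarrow> real \<Rightarrow> real \<Rightarrow> real
    \<Rightarrow> real \<Rightarrow> real \<Rightarrow> real \<Rightarrow> real \<Rightarrow> real \<Rightarrow> real \<Rightarrow> real \<Rightarrow> real \<Rightarrow> real \<Rightarrow> real" where
  "W M B T r \<mu> \<sigma> \<rho> m0 m1 \<kappa> \<delta> \<alpha> fI t z h =
     (\<integral>\<omega>. integral {t..T} (\<lambda>s.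
         exp (- integral {t..s} (\<lambda>u. \<rho> + MH m0 m1 \<kappa> (H2 \<delta> fI t h u)))
         * u_hat \<alpha> (Z2 r \<mu> \<sigma> \<rho> m0 m1 \<kappa> \<delta> fI B t z h s \<omega>) (H2 \<delta> fI t h s)) \<partial>M)"

definition W_h :: "'a measure \<Rightarrow> (real \<Rightarrow> 'a \<Rightarrow> real) \<Rightarrow> real \<Rightarrow> real \<Rightarrow> real \<Rightarrow> real \<Rightarrow> real
    \<Rightarrow> real \<Rightarrow> real \<Rightarrow> real \<Rightarrow> real \<Rightarrow> real \<Rightarrow> real \<Rightarrow> real \<Rightarrow> real \<Rightarrow> real \<Rightarrow> real" where
  "W_h M B T r \<mu> \<sigma> \<rho> m0 m1 \<kappa> \<delta> \<alpha> fI t z h =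
     deriv (\<lambda>k. W M B T r \<mu> \<sigma> \<rho> m0 m1 \<kappa> \<delta> \<alpha> fI t z k) h"

definition H1 :: "real \<Rightarrow> real \<Rightarrow> real \<Rightarrow> real" where
  "H1 \<delta> h s = h * exp (- \<delta> * s)"

definition Z1 :: "real \<Rightarrow> real \<Rightarrow> real \<Rightarrow> real \<Rightarrow> real \<Rightarrow> real \<Rightarrow> real \<Rightarrow> real
    \<Rightarrow> (real \<Rightarrow> 'a \<Rightarrow> real) \<Rightarrow> real \<Rightarrow> real \<Rightarrow> real \<Rightarrow> 'a \<Rightarrow> real" where
  "Z1 r \<mu> \<sigma> \<rho> m0 m1 \<kappa> \<delta> B z h s \<omega> =
     z * exp (- (r + (theta r \<mu> \<sigma>)\<^sup>2 / 2) * s - theta r \<mu> \<sigma> * B s \<omega>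
              + integral {0..s} (\<lambda>u. \<rho> + MH m0 m1 \<kappa> (H1 \<delta> h u)))"

definition stopping_times_upto :: "'a measure \<Rightarrow> (real \<Rightarrow> 'a measure) \<Rightarrow> real \<Rightarrow> ('a \<Rightarrow> real) set" where
  "stopping_times_upto M F b =
     {\<tau>. stopping_time F \<tau> \<and> (\<forall>\<omega>\<in>space M. 0 \<le> \<tau> \<omega> \<and> \<tau> \<omega> \<le> b)}"

definition J_hat :: "'a measure \<Rightarrow> (real \<Rightarrow> 'a measure) \<Rightarrow> (real \<Rightarrow> 'a \<Rightarrow> real) \<Rightarrow> real
    \<Rightarrow> real \<Rightarrow> real \<Rightarrow> real \<Rightarrow> real \<Rightarrow> real \<Rightarrow> real \<Rightarrow> real \<Rightarrow> real \<Rightarrow> real \<Rightarrow> real \<Rightarrow> real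
    \<Rightarrow> real \<Rightarrow> real \<Rightarrow> real \<Rightarrow> ereal" where
  "J_hat M F B T r \<mu> \<sigma> \<rho> m0 m1 \<kappa> \<delta> \<alpha> I fI t z h =
     (SUP \<tau>\<in>stopping_times_upto M F (T - t). ereal (\<integral>\<omega>. integral {0..\<tau> \<omega>} (\<lambda>s.
         I * z * exp (- r * s - theta r \<mu> \<sigma> * B s \<omega> - (theta r \<mu> \<sigma>)\<^sup>2 / 2 * s)
         - exp (- integral {0..s} (\<lambda>u. \<rho> + MH m0 m1 \<kappa> (H1 \<delta> h u))) * fI
           * W_h M B T r \<mu> \<sigma> \<rho> m0 m1 \<kappa> \<delta> \<alpha> fI (t + s)
               (Z1 r \<mu> \<sigma> \<rho> m0 m1 \<kappa> \<delta> B z h s \<omega>) (H1 \<delta> h s)) \<partial>M))"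

end

theory Submission
  imports Defs
begin


lemma aux_conv: "0 \<le> v \<Longrightarrow> v \<le> 1 \<Longrightarrow> a \<le> (y::real) \<Longrightarrow> a + v * (y - a) \<le> y \<and> a \<le> a + v * (y - a)"
  by (smt (verit) mult_left_le_one_le mult_nonneg_nonneg)

lemma cont_param_upper:
  fixes \<phi> :: "'k::topological_space \<Rightarrow> real \<Rightarrow> real"
  assumes cont: "continuous_on (K \<times> {a..b}) (\<lambda>(k,u). \<phi> k u)"
  shows "continuous_on (K \<times> {a..b}) (\<lambda>(k,y). integral {a..y} (\<phi> k))"
proof -
  have eq: "integral {a..y} (\<phi> k) = integral {0..1} (\<lambda>v. (y - a) * \<phi> k (a + v * (y - a)))"
    if "k \<in> K" "y \<in> {a..b}" for k y
  proof -
    have "continuous_on {a..y} (\<lambda>u. (\<lambda>(k,u). \<phi> k u) (k,u))"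
      by (rule continuous_on_compose2[OF cont]) (use that in \<open>auto intro!: continuous_intros\<close>)
    then have ck: "continuous_on {a..y} (\<phi> k)" by simp
    have "((\<lambda>v. (y - a) *\<^sub>R \<phi> k (a + v * (y - a))) has_integral integral {a + 0 * (y - a)..a + 1 * (y - a)} (\<phi> k)) {0..1}"
    proof (rule has_integral_substitution[where c=a and d=y])
      show "(0::real) \<le> 1" by simp
      show "a + 0 * (y - a) \<le> a + 1 * (y - a)" using that by simp
      show "(\<lambda>v. a + v * (y - a)) ` {0..1} \<subseteq> {a..y}"
      proof (rule image_subsetI)
        fix v :: real assume "v \<in> {0..1}"
        then show "a + v * (y - a) \<in> {a..y}" using aux_conv[of v a y] that by simp
      qed
      show "continuous_on {a..y} (\<phi> k)" by (rule ck)
      show "((\<lambda>v. a + v * (y - a)) has_field_derivative (y - a)) (at v within {0..1})" for v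
        by (rule derivative_eq_intros refl | simp)+
    qed
    then show ?thesis by (simp add: has_integral_iff)
  qed
  have "continuous_on (K \<times> {a..b}) (\<lambda>ky. integral (cbox 0 1) (\<lambda>v. (snd ky - a) * \<phi> (fst ky) (a + v * (snd ky - a))))"
  proof (rule integral_continuous_on_param[where f="\<lambda>ky v. (snd ky - a) * \<phi> (fst ky) (a + v * (snd ky - a))", unfolded split_beta])
    have c2: "continuous_on ((K \<times> {a..b}) \<times> cbox 0 1) (\<lambda>x. (fst (fst x), a + snd x * (snd (fst x) - a)))"
      by (intro continuous_intros)
    have "continuous_on ((K \<times> {a..b}) \<times> cbox 0 1) (\<lambda>x. (\<lambda>(k,u). \<phi> k u) (fst (fst x), a + snd x * (snd (fst x) - a)))"
    proof (rule continuous_on_compose2[OF cont c2], rule image_subsetI)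
      fix x :: "('k \<times> real) \<times> real" assume x: "x \<in> (K \<times> {a..b}) \<times> cbox 0 1"
      then have "0 \<le> snd x" "snd x \<le> 1" "a \<le> snd (fst x)" "snd (fst x) \<le> b" "fst (fst x) \<in> K"
        by (auto simp: mem_Times_iff)
      then show "(fst (fst x), a + snd x * (snd (fst x) - a)) \<in> K \<times> {a..b}"
        using aux_conv[of "snd x" a "snd (fst x)"] by auto
    qed
    then have c3: "continuous_on ((K \<times> {a..b}) \<times> cbox 0 1) (\<lambda>x. \<phi> (fst (fst x)) (a + snd x * (snd (fst x) - a)))"
      by simp
    show "continuous_on ((K \<times> {a..b}) \<times> cbox 0 1)
     (\<lambda>x. (snd (fst x) - a) * \<phi> (fst (fst x)) (a + snd x * (snd (fst x) - a)))"
      by (rule continuous_on_mult[OF _ c3]) (intro continuous_intros)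
  qed
  then show ?thesis
  proof (rule continuous_on_eq)
    fix x assume "x \<in> K \<times> {a..b}"
    then obtain k y where xy: "x = (k, y)" "k \<in> K" "y \<in> {a..b}" by auto
    show "integral (cbox 0 1) (\<lambda>v. (snd x - a) * \<phi> (fst x) (a + v * (snd x - a))) = (\<lambda>(k,y). integral {a..y} (\<phi> k)) x"
      using eq[OF xy(2,3)] unfolding xy by (simp add: cbox_interval)
  qed
qed



lemma floor_approx_tendsto:
  "(\<lambda>n. real_of_int \<lfloor>s * real (Suc n)\<rfloor> / real (Suc n)) \<longlonglongrightarrow> (s::real)"
proof -
  have le: "\<bar>real_of_int \<lfloor>s * real (Suc n)\<rfloor> / real (Suc n) - s\<bar> \<le> 1 / real (Suc n)" for n
  proof -
    define N where "N = real (Suc n)"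
    have pos: "N > 0" by (simp add: N_def)
    have a: "real_of_int \<lfloor>s * N\<rfloor> \<le> s * N" by simp
    have b: "s * N - 1 < real_of_int \<lfloor>s * N\<rfloor>" by linarith
    have "real_of_int \<lfloor>s * N\<rfloor> / N \<le> s" using a pos by (simp add: divide_le_eq)
    moreover have "s - 1 / N \<le> real_of_int \<lfloor>s * N\<rfloor> / N"
    proof -
      have "s - 1/N = (s*N - 1)/N" using pos by (simp add: field_simps)
      also have "\<dots> \<le> real_of_int \<lfloor>s*N\<rfloor> / N" using b pos by (intro divide_right_mono) auto
      finally show ?thesis .
    qed
    ultimately show ?thesis unfolding N_def[symmetric] by linarith
  qed
  have "(\<lambda>n. 1 / real (Suc n)) \<longlonglongrightarrow> 0" by (rule LIMSEQ_Suc[OF lim_const_over_n]) 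
  then have "(\<lambda>n. real_of_int \<lfloor>s * real (Suc n)\<rfloor> / real (Suc n) - s) \<longlonglongrightarrow> 0"
    by (rule Lim_null_comparison[rotated]) (use le in auto)
  then show ?thesis by (simp add: LIM_zero_iff)
qed

lemma carath:
  fixes f :: "real \<Rightarrow> 'a \<Rightarrow> real"
  assumes cont: "\<And>\<omega>. \<omega> \<in> space M \<Longrightarrow> continuous_on UNIV (\<lambda>s. f s \<omega>)"
    and meas: "\<And>s. f s \<in> borel_measurable M"
  shows "(\<lambda>(\<omega>,s). f s \<omega>) \<in> borel_measurable (M \<Otimes>\<^sub>M lborel)"
proof (rule borel_measurable_LIMSEQ_real)
  fix n
  show "(\<lambda>x. f (real_of_int \<lfloor>snd x * real (Suc n)\<rfloor> / real (Suc n)) (fst x)) \<in> borel_measurable (M \<Otimes>\<^sub>M lborel)"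
  proof (rule measurable_compose_countable'[where I=UNIV and f="\<lambda>i x. f (real_of_int i / real (Suc n)) (fst x)" and g="\<lambda>x. \<lfloor>snd x * real (Suc n)\<rfloor>"])
    show "(\<lambda>x. f (real_of_int i / real (Suc n)) (fst x)) \<in> borel_measurable (M \<Otimes>\<^sub>M lborel)" for i
      using meas by measurable
    show "(\<lambda>x. \<lfloor>snd x * real (Suc n)\<rfloor>) \<in> M \<Otimes>\<^sub>M lborel \<rightarrow>\<^sub>M count_space UNIV"
      by measurable
  qed auto
next
  fix x :: "'a \<times> real" assume "x \<in> space (M \<Otimes>\<^sub>M lborel)"
  then have "fst x \<in> space M" by (auto simp: space_pair_measure)
  then have "isCont (\<lambda>s. f s (fst x)) (snd x)" using cont by (simp add: continuous_on_eq_continuous_at)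
  then show "(\<lambda>n. f (real_of_int \<lfloor>snd x * real (Suc n)\<rfloor> / real (Suc n)) (fst x)) \<longlonglongrightarrow> (case x of (\<omega>, s) \<Rightarrow> f s \<omega>)"
  proof -
    obtain \<omega> s where x: "x = (\<omega>, s)" by (cases x)
    have "(\<lambda>n. f (real_of_int \<lfloor>s * real (Suc n)\<rfloor> / real (Suc n)) \<omega>) \<longlonglongrightarrow> f s \<omega>"
    proof -
      have ic: "isCont (\<lambda>s. f s \<omega>) s" using \<open>isCont (\<lambda>s. f s (fst x)) (snd x)\<close> unfolding x by simp
      show ?thesis by (rule isCont_tendsto_compose[OF ic floor_approx_tendsto])
    qed
    then show ?thesis unfolding x by simp
  qed
qed



lemma normal_density_shift_exp:
  assumes "\<sigma> > 0"
  shows "normal_density 0 \<sigma> x * exp (c * x) = exp (c\<^sup>2 * \<sigma>\<^sup>2 / 2) * normal_density (c * \<sigma>\<^sup>2) \<sigma> x"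
proof -
  have "- (x - 0)\<^sup>2 / (2 * \<sigma>\<^sup>2) + c * x = c\<^sup>2 * \<sigma>\<^sup>2 / 2 + (- (x - c * \<sigma>\<^sup>2)\<^sup>2 / (2 * \<sigma>\<^sup>2))"
    using assms by (simp add: field_simps power2_eq_square)
  then show ?thesis
    unfolding normal_density_def by (simp add: exp_add[symmetric] mult.assoc mult.left_commute)
qed

lemma gauss_mgf:
  assumes "\<sigma> > 0"
  shows "(\<integral>\<^sup>+x. ennreal (normal_density 0 \<sigma> x) * ennreal (exp (c*x)) \<partial>lborel) = ennreal (exp (c\<^sup>2 * \<sigma>\<^sup>2 / 2))"
proof -
  have "(\<integral>\<^sup>+x. ennreal (normal_density 0 \<sigma> x) * ennreal (exp (c*x)) \<partial>lborel)
      = (\<integral>\<^sup>+x. ennreal (exp (c\<^sup>2 * \<sigma>\<^sup>2 / 2)) * ennreal (normal_density (c * \<sigma>\<^sup>2) \<sigma> x) \<partial>lborel)"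
    using normal_density_shift_exp[OF assms]
    by (intro nn_integral_cong) (simp add: ennreal_mult[symmetric])
  also have "\<dots> = ennreal (exp (c\<^sup>2 * \<sigma>\<^sup>2 / 2)) * (\<integral>\<^sup>+x. ennreal (normal_density (c * \<sigma>\<^sup>2) \<sigma> x) \<partial>lborel)"
    by (rule nn_integral_cmult) simp
  also have "(\<integral>\<^sup>+x. ennreal (normal_density (c * \<sigma>\<^sup>2) \<sigma> x) \<partial>lborel) = 1"
    using assms by (subst nn_integral_eq_integral) (auto simp: integrable_normal_density integral_normal_density)
  finally show ?thesis by simp
qed



lemma setting_facts:
  assumes "std_BM_setting M F B"
  shows "prob_space M"
    and "\<And>s. 0 \<le> s \<Longrightarrow> B s \<in> borel_measurable M"
    and "\<And>\<omega>. \<omega> \<in> space M \<Longrightarrow> B 0 \<omega> = 0"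
    and "\<And>\<omega>. \<omega> \<in> space M \<Longrightarrow> continuous_on {0..} (\<lambda>t. B t \<omega>)"
    and "\<And>s t. 0 \<le> s \<Longrightarrow> s < t \<Longrightarrow> distributed M lborel (\<lambda>\<omega>. B t \<omega> - B s \<omega>) (normal_density 0 (sqrt (t - s)))"
    and "\<And>s. space (F s) = space M" "\<And>s. sets (F s) \<subseteq> sets M"
proof -
  note A = assms[unfolded std_BM_setting_def]
  show "prob_space M" using A by blast
  show sp: "space (F s) = space M" for s using A by (auto simp: filtration_def)
  show ss: "sets (F s) \<subseteq> sets M" for s using A by blast
  show "B s \<in> borel_measurable M" if "0 \<le> s" for s
  proof (rule measurable_from_subalg)
    show "subalgebra M (F s)" using sp ss by (auto simp: subalgebra_def)
    show "B s \<in> borel_measurable (F s)" using A that by blast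
  qed
  show "B 0 \<omega> = 0" if "\<omega> \<in> space M" for \<omega> using A that by blast
  show "continuous_on {0..} (\<lambda>t. B t \<omega>)" if "\<omega> \<in> space M" for \<omega> using A that by blast
  show "distributed M lborel (\<lambda>\<omega>. B t \<omega> - B s \<omega>) (normal_density 0 (sqrt (t - s)))"
    if "0 \<le> s" "s < t" for s t using A that by blast
qed

lemma hk_nn:
  fixes g :: "real \<Rightarrow> real"
  assumes "continuous_on {a..b} g" "\<And>s. s \<in> {a..b} \<Longrightarrow> 0 \<le> g s"
  shows "(\<integral>\<^sup>+s. ennreal (indicator {a..b} s * g s) \<partial>lborel) = ennreal (integral {a..b} g)"
proof (rule nn_integral_has_integral_lborel)
  show "(\<lambda>s. indicator {a..b} s * g s) \<in> borel_measurable borel"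
    using borel_measurable_continuous_on_indicator[OF _ assms(1)] by simp
  show "0 \<le> indicator {a..b} x * g x" for x using assms(2) by (auto simp: indicator_def)
  have "(g has_integral integral {a..b} g) {a..b}"
    using integrable_continuous_interval[OF assms(1)] by (simp add: has_integral_integral)
  then show "((\<lambda>s. indicator {a..b} s * g s) has_integral integral {a..b} g) UNIV"
  proof -
    have "(\<lambda>s. indicator {a..b} s * g s) = (\<lambda>x. if x \<in> {a..b} then g x else 0)"
      by (auto simp: indicator_def fun_eq_iff)
    then show ?thesis using has_integral_restrict_UNIV[of "{a..b}" g] \<open>(g has_integral _) _\<close> by simp
  qed
qed

lemma mgf_B:
  assumes set: "std_BM_setting M F B" and "0 \<le> t0" "t0 \<le> s"
  shows "(\<integral>\<^sup>+\<omega>. ennreal (exp (c * (B s \<omega> - B t0 \<omega>))) \<partial>M) = ennreal (exp (c\<^sup>2 * (s - t0) / 2))"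
proof (cases "s = t0")
  case True
  interpret prob_space M using setting_facts[OF set] by blast
  show ?thesis using True by (simp add: emeasure_space_1)
next
  case False
  then have lt: "t0 < s" using assms by simp
  have d: "distributed M lborel (\<lambda>\<omega>. B s \<omega> - B t0 \<omega>) (normal_density 0 (sqrt (s - t0)))"
    using setting_facts(5)[OF set assms(2) lt] .
  have "(\<integral>\<^sup>+\<omega>. ennreal (exp (c * (B s \<omega> - B t0 \<omega>))) \<partial>M)
     = (\<integral>\<^sup>+x. ennreal (normal_density 0 (sqrt (s - t0)) x) * ennreal (exp (c*x)) \<partial>lborel)"
    by (subst distributed_nn_integral[OF d, of "\<lambda>x. ennreal (exp (c*x))"]) auto
  also have "\<dots> = ennreal (exp (c\<^sup>2 * (sqrt (s - t0))\<^sup>2 / 2))"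
    by (rule gauss_mgf) (use lt in simp)
  finally show ?thesis using lt by simp
qed

lemma tonelli_gauss:
  fixes c :: real
  assumes set: "std_BM_setting M F B" and t0: "0 \<le> t0" "t0 \<le> t1"
    and G: "continuous_on {t0..t1} G" "\<And>s. s \<in> {t0..t1} \<Longrightarrow> 0 \<le> G s"
  defines "\<Lambda> \<equiv> (\<lambda>\<omega>. integral {t0..t1} (\<lambda>s. G s * exp (c * (B s \<omega> - B t0 \<omega>))))"
  shows "\<Lambda> \<in> borel_measurable M" "integrable M \<Lambda>"
    "integral\<^sup>L M \<Lambda> = integral {t0..t1} (\<lambda>s. G s * exp (c\<^sup>2 * (s - t0) / 2))"
proof -
  interpret prob_space M using setting_facts[OF set] by blast
  interpret lb: sigma_finite_measure lborel by (rule sigma_finite_lborel)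
  interpret pair_sigma_finite M lborel ..
  define cl where "cl s = max t0 (min t1 s)" for s
  have cl_in: "cl s \<in> {t0..t1}" for s using t0 by (auto simp: cl_def)
  have cl_id: "s \<in> {t0..t1} \<Longrightarrow> cl s = s" for s by (auto simp: cl_def)
  have cont_cl: "continuous_on UNIV cl" unfolding cl_def by (intro continuous_intros)
  define f' where "f' s \<omega> = G (cl s) * exp (c * (B (cl s) \<omega> - B t0 \<omega>))" for s \<omega>
  have Bc: "continuous_on {t0..t1} (\<lambda>s. B s \<omega>)" if "\<omega> \<in> space M" for \<omega>
    using setting_facts(4)[OF set that] by (rule continuous_on_subset) (use t0 in auto)
  have "(\<lambda>(\<omega>,s). f' s \<omega>) \<in> borel_measurable (M \<Otimes>\<^sub>M lborel)"
  proof (rule carath)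
    fix \<omega> assume "\<omega> \<in> space M"
    show "continuous_on UNIV (\<lambda>s. f' s \<omega>)" unfolding f'_def
      by (intro continuous_intros continuous_on_compose2[OF G(1) cont_cl]
            continuous_on_compose2[OF Bc[OF \<open>\<omega> \<in> space M\<close>] cont_cl]) (use cl_in in auto)
  next
    fix s
    have "0 \<le> cl s" using cl_in[of s] t0 by auto
    then show "f' s \<in> borel_measurable M" unfolding f'_def
      using setting_facts(2)[OF set] t0 by measurable
  qed
  then have measf: "(\<lambda>(\<omega>,s). indicator {t0..t1} s * f' s \<omega>) \<in> borel_measurable (M \<Otimes>\<^sub>M lborel)"
    by measurable
  define f where "f \<omega> s = indicator {t0..t1} s * (G s * exp (c * (B s \<omega> - B t0 \<omega>)))" for \<omega> s
  have f_eq: "f \<omega> s = indicator {t0..t1} s * f' s \<omega>" for \<omega> s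
    by (cases "s \<in> {t0..t1}") (auto simp: f_def f'_def cl_id)
  have measf2: "(\<lambda>(\<omega>,s). ennreal (f \<omega> s)) \<in> borel_measurable (M \<Otimes>\<^sub>M lborel)"
    unfolding f_eq using measf by measurable
  have contw: "continuous_on {t0..t1} (\<lambda>s. G s * exp (c * (B s \<omega> - B t0 \<omega>)))" if "\<omega> \<in> space M" for \<omega>
    by (intro continuous_intros G Bc that)
  have b: "(\<integral>\<^sup>+s. ennreal (f \<omega> s) \<partial>lborel) = ennreal (\<Lambda> \<omega>)" if "\<omega> \<in> space M" for \<omega>
    unfolding f_def \<Lambda>_def by (rule hk_nn[OF contw[OF that]]) (use G(2) in auto)
  have Lnn: "0 \<le> \<Lambda> \<omega>" if "\<omega> \<in> space M" for \<omega>
    unfolding \<Lambda>_def by (rule integral_nonneg[OF integrable_continuous_interval[OF contw[OF that]]]) (use G(2) in auto)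
  show meas: "\<Lambda> \<in> borel_measurable M"
  proof -
    have "(\<lambda>\<omega>. enn2real (\<integral>\<^sup>+s. ennreal (f \<omega> s) \<partial>lborel)) \<in> borel_measurable M"
      using measf2 by measurable
    then show ?thesis
      by (rule measurable_cong[THEN iffD1, rotated]) (use b Lnn in auto)
  qed
  define I where "I = integral {t0..t1} (\<lambda>s. G s * exp (c\<^sup>2 * (s - t0) / 2))"
  have contI: "continuous_on {t0..t1} (\<lambda>s. G s * exp (c\<^sup>2 * (s - t0) / 2))"
    by (intro continuous_intros G) auto
  have Inn: "0 \<le> I" unfolding I_def
    by (rule integral_nonneg[OF integrable_continuous_interval[OF contI]]) (use G(2) in auto)
  have "(\<integral>\<^sup>+\<omega>. ennreal (\<Lambda> \<omega>) \<partial>M) = (\<integral>\<^sup>+\<omega>. (\<integral>\<^sup>+s. ennreal (f \<omega> s) \<partial>lborel) \<partial>M)"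
    by (rule nn_integral_cong) (use b in auto)
  also have "\<dots> = (\<integral>\<^sup>+s. (\<integral>\<^sup>+\<omega>. ennreal (f \<omega> s) \<partial>M) \<partial>lborel)"
    by (rule Fubini'[symmetric]) (use measf2 in simp)
  also have "\<dots> = (\<integral>\<^sup>+s. ennreal (indicator {t0..t1} s * (G s * exp (c\<^sup>2 * (s - t0) / 2))) \<partial>lborel)"
  proof (rule nn_integral_cong)
    fix s :: real
    show "(\<integral>\<^sup>+\<omega>. ennreal (f \<omega> s) \<partial>M) = ennreal (indicator {t0..t1} s * (G s * exp (c\<^sup>2 * (s - t0) / 2)))"
    proof (cases "s \<in> {t0..t1}")
      case True
      have "(\<integral>\<^sup>+\<omega>. ennreal (f \<omega> s) \<partial>M) = (\<integral>\<^sup>+\<omega>. ennreal (G s) * ennreal (exp (c * (B s \<omega> - B t0 \<omega>))) \<partial>M)"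
        using True G(2)[OF True] by (intro nn_integral_cong) (simp add: f_def ennreal_mult)
      also have "\<dots> = ennreal (G s) * (\<integral>\<^sup>+\<omega>. ennreal (exp (c * (B s \<omega> - B t0 \<omega>))) \<partial>M)"
      proof (intro nn_integral_cmult)
        have [measurable]: "B s \<in> borel_measurable M" "B t0 \<in> borel_measurable M"
          using setting_facts(2)[OF set] True t0 by auto
        show "(\<lambda>\<omega>. ennreal (exp (c * (B s \<omega> - B t0 \<omega>)))) \<in> borel_measurable M" by measurable
      qed
      also have "\<dots> = ennreal (G s) * ennreal (exp (c\<^sup>2 * (s - t0) / 2))"
        using mgf_B[OF set t0(1), of s c] True by simp
      finally show ?thesis using True G(2)[OF True] by (simp add: ennreal_mult)
    qed (simp add: f_def)
  qed
  also have "\<dots> = ennreal I"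
    unfolding I_def by (rule hk_nn[OF contI]) (use G(2) in auto)
  finally have nnI: "(\<integral>\<^sup>+\<omega>. ennreal (\<Lambda> \<omega>) \<partial>M) = ennreal I" .
  show "integrable M \<Lambda>"
    by (rule integrableI_nonneg[OF meas]) (use Lnn nnI in auto)
  show "integral\<^sup>L M \<Lambda> = I"
    by (subst integral_eq_nn_integral[OF meas]) (use Lnn nnI Inn in auto)
qed



lemma cont_slice:
  assumes "continuous_on (A \<times> B) (\<lambda>(k,x). f k x)" "k \<in> A" "S \<subseteq> B"
  shows "continuous_on S (f k)"
proof -
  have "continuous_on S (\<lambda>x. (\<lambda>(k,x). f k x) (k, x))"
    by (rule continuous_on_compose2[OF assms(1)]) (use assms in \<open>auto intro!: continuous_intros\<close>)
  then show ?thesis by simp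
qed

locale detp =
  fixes m0 m1 \<kappa> \<delta> fI C q c1 :: real
  assumes m1: "m1 \<ge> 0" and \<kappa>: "\<kappa> > 0" and \<delta>: "\<delta> > 0" and fI: "fI > 0"
begin

definition \<eta> :: "real \<Rightarrow> real \<Rightarrow> real" where
  "\<eta> k x = k * exp (- \<delta> * x) + fI / \<delta> * (1 - exp (- \<delta> * x))"

definition \<Psi> :: "real \<Rightarrow> real \<Rightarrow> real" where
  "\<Psi> k x = integral {0..x} (\<lambda>v. MH m0 m1 \<kappa> (\<eta> k v))"

definition dMH :: "real \<Rightarrow> real" where
  "dMH y = m1 * (- \<kappa> * y powr (- \<kappa> - 1))"

definition \<Psi>k :: "real \<Rightarrow> real \<Rightarrow> real" where
  "\<Psi>k k x = integral {0..x} (\<lambda>v. dMH (\<eta> k v) * exp (- \<delta> * v))"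

definition Fk :: "real \<Rightarrow> real \<Rightarrow> real" where
  "Fk k x = C * \<eta> k x * exp (q * \<Psi> k x + c1 * x)"

definition Fk' :: "real \<Rightarrow> real \<Rightarrow> real" where
  "Fk' k x = C * exp (q * \<Psi> k x + c1 * x) * (exp (- \<delta> * x) + \<eta> k x * q * \<Psi>k k x)"

lemma \<eta>_pos: assumes "k > 0" "x \<ge> 0" shows "\<eta> k x > 0"
proof -
  have "exp (- \<delta> * x) \<le> 1" using \<delta> assms by simp
  then have "fI / \<delta> * (1 - exp (- \<delta> * x)) \<ge> 0" using fI \<delta> by simp
  moreover have "k * exp (- \<delta> * x) > 0" using assms by simp
  ultimately show ?thesis unfolding \<eta>_def by linarith
qed

lemma cont_\<eta>: "continuous_on S (\<lambda>(k,x). \<eta> k x)"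
  unfolding \<eta>_def split_beta by (intro continuous_intros)

lemma has_deriv_\<eta>: "((\<lambda>k. \<eta> k x) has_field_derivative exp (- \<delta> * x)) (at k within U)"
  unfolding \<eta>_def by (auto intro!: derivative_eq_intros)

lemma cont_MH_\<eta>: "continuous_on ({0<..} \<times> {0..}) (\<lambda>(k,x). MH m0 m1 \<kappa> (\<eta> k x))"
  unfolding MH_def split_beta
  by (intro continuous_intros continuous_on_compose2[OF cont_\<eta>, unfolded split_beta, of _ id, simplified])
     (auto, metis \<eta>_pos less_irrefl)


lemma cont_dMH_\<eta>: "continuous_on ({0<..} \<times> {0..}) (\<lambda>(k,x). dMH (\<eta> k x) * exp (- \<delta> * x))"
  unfolding dMH_def split_beta
  by (intro continuous_intros continuous_on_compose2[OF cont_\<eta>, unfolded split_beta, of _ id, simplified])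
     (auto, metis \<eta>_pos less_irrefl)

lemma cont_\<Psi>: "continuous_on ({0<..} \<times> {0..X}) (\<lambda>(k,x). \<Psi> k x)"
  unfolding \<Psi>_def
  by (rule cont_param_upper[where \<phi>="\<lambda>k v. MH m0 m1 \<kappa> (\<eta> k v)"], rule continuous_on_subset[OF cont_MH_\<eta>]) auto

lemma cont_\<Psi>k: "continuous_on ({0<..} \<times> {0..X}) (\<lambda>(k,x). \<Psi>k k x)"
  unfolding \<Psi>k_def
  by (rule cont_param_upper[where \<phi>="\<lambda>k v. dMH (\<eta> k v) * exp (- \<delta> * v)"], rule continuous_on_subset[OF cont_dMH_\<eta>]) auto

lemma deriv_MH_\<eta>:
  assumes "k > 0" "v \<ge> 0"
  shows "((\<lambda>k. MH m0 m1 \<kappa> (\<eta> k v)) has_field_derivative dMH (\<eta> k v) * exp (- \<delta> * v)) (at k within U)"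
proof -
  have pos: "\<eta> k v > 0" using \<eta>_pos assms by blast
  show ?thesis unfolding MH_def dMH_def
    by (rule derivative_eq_intros has_deriv_\<eta> refl | use pos in simp)+
qed

lemma deriv_\<Psi>:
  assumes "k > 0" "x \<ge> 0"
  shows "((\<lambda>k. \<Psi> k x) has_field_derivative \<Psi>k k x) (at k)"
proof -
  have "((\<lambda>k. integral (cbox 0 x) (\<lambda>v. MH m0 m1 \<kappa> (\<eta> k v))) has_field_derivative
          integral (cbox 0 x) (\<lambda>v. dMH (\<eta> k v) * exp (- \<delta> * v))) (at k within {0<..})"
  proof (rule leibniz_rule_field_derivative)
    show "((\<lambda>k. MH m0 m1 \<kappa> (\<eta> k v)) has_field_derivative dMH (\<eta> k v) * exp (- \<delta> * v)) (at k within {0<..})"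
      if "k \<in> {0<..}" "v \<in> cbox 0 x" for k v
      using that by (intro deriv_MH_\<eta>) auto
    show "(\<lambda>v. MH m0 m1 \<kappa> (\<eta> k v)) integrable_on cbox 0 x" if "k \<in> {0<..}" for k
    proof (rule integrable_continuous)
      show "continuous_on (cbox 0 x) (\<lambda>v. MH m0 m1 \<kappa> (\<eta> k v))"
        using cont_slice[OF cont_MH_\<eta>, of k "cbox 0 x"] that by auto
    qed
    show "continuous_on ({0<..} \<times> cbox 0 x) (\<lambda>(k, v). dMH (\<eta> k v) * exp (- \<delta> * v))"
      by (rule continuous_on_subset[OF cont_dMH_\<eta>]) auto
    show "k \<in> {0<..}" using assms by simp
    show "convex {0::real<..}" by (rule convex_real_interval)
  qed
  moreover have "at k within {0<..} = at k" using assms by (intro at_within_open) auto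
  moreover have "cbox 0 x = {0..x}" by (rule cbox_interval)
  ultimately show ?thesis
    unfolding \<Psi>_def \<Psi>k_def by simp
qed

lemma \<Psi>k_nonpos:
  assumes "k > 0" "x \<ge> 0"
  shows "\<Psi>k k x \<le> 0"
proof -
  have c: "continuous_on {0..x} (\<lambda>v. dMH (\<eta> k v) * exp (- \<delta> * v))"
    using cont_slice[OF cont_dMH_\<eta>, of k "{0..x}"] assms by auto
  have "\<Psi>k k x \<le> integral {0..x} (\<lambda>v. 0::real)"
    unfolding \<Psi>k_def
  proof (rule integral_le[OF integrable_continuous_interval[OF c]])
    show "dMH (\<eta> k v) * exp (- \<delta> * v) \<le> 0" if "v \<in> {0..x}" for v
      using m1 \<kappa> by (auto simp: dMH_def mult_nonneg_nonneg intro!: mult_nonpos_nonneg)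
  qed auto
  then show ?thesis by simp
qed

lemma cont_Fk: "continuous_on ({0<..} \<times> {0..X}) (\<lambda>(k,x). Fk k x)"
  unfolding Fk_def split_beta
  by (intro continuous_intros continuous_on_compose2[OF cont_\<Psi>, unfolded split_beta, of _ id, simplified]
      continuous_on_compose2[OF cont_\<eta>, unfolded split_beta, of _ id, simplified]) auto

lemma cont_Fk': "continuous_on ({0<..} \<times> {0..X}) (\<lambda>(k,x). Fk' k x)"
  unfolding Fk'_def split_beta
  by (intro continuous_intros continuous_on_compose2[OF cont_\<Psi>, unfolded split_beta, of _ id, simplified]
      continuous_on_compose2[OF cont_\<Psi>k, unfolded split_beta, of _ id, simplified]
      continuous_on_compose2[OF cont_\<eta>, unfolded split_beta, of _ id, simplified]) auto

lemma deriv_Fk: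
  assumes "k > 0" "x \<ge> 0"
  shows "((\<lambda>k. Fk k x) has_field_derivative Fk' k x) (at k within U)"
proof -
  have d: "((\<lambda>k. \<Psi> k x) has_field_derivative \<Psi>k k x) (at k within U)"
    using deriv_\<Psi>[OF assms] by (rule has_field_derivative_at_within)
  show ?thesis unfolding Fk_def Fk'_def
    by (rule derivative_eq_intros has_deriv_\<eta> d refl | simp add: algebra_simps)+
qed

lemma deriv_V:
  assumes "k > 0" "X \<ge> 0"
  shows "((\<lambda>k. integral {0..X} (Fk k)) has_field_derivative integral {0..X} (Fk' k)) (at k)"
proof -
  have "((\<lambda>k. integral (cbox 0 X) (Fk k)) has_field_derivative integral (cbox 0 X) (Fk' k)) (at k within {0<..})"
  proof (rule leibniz_rule_field_derivative)
    show "((\<lambda>k. Fk k v) has_field_derivative Fk' k v) (at k within {0<..})"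
      if "k \<in> {0<..}" "v \<in> cbox 0 X" for k v
      using that by (intro deriv_Fk) auto
    show "Fk k integrable_on cbox 0 X" if "k \<in> {0<..}" for k
    proof (rule integrable_continuous)
      show "continuous_on (cbox 0 X) (Fk k)"
        using cont_slice[OF cont_Fk, of k "cbox 0 X"] that by auto
    qed
    show "continuous_on ({0<..} \<times> cbox 0 X) (\<lambda>(k, v). Fk' k v)"
      using cont_Fk' by simp
    show "k \<in> {0<..}" using assms by simp
    show "convex {0::real<..}" by (rule convex_real_interval)
  qed
  moreover have "at k within {0<..} = at k" using assms by (intro at_within_open) auto
  moreover have "cbox 0 X = {0..X}" by (rule cbox_interval)
  ultimately show ?thesis by simp
qed

lemma Fk'_nonneg:
  assumes "C \<ge> 0" "q \<le> 0" "k > 0" "x \<ge> 0"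
  shows "Fk' k x \<ge> 0"
proof -
  have "q * \<Psi>k k x \<ge> 0" using \<Psi>k_nonpos[OF assms(3,4)] assms(2) by (simp add: mult_nonpos_nonpos)
  then have "\<eta> k x * q * \<Psi>k k x \<ge> 0" using \<eta>_pos[OF assms(3,4)] by (simp add: mult.assoc)
  then show ?thesis unfolding Fk'_def using assms(1) by (intro mult_nonneg_nonneg) auto
qed

end



lemma powr_exp_div:
  fixes X \<alpha>' e :: real
  assumes a: "\<alpha>' > 0"
  shows "(exp X / \<alpha>') powr e = exp (e * X - e * ln \<alpha>')"
proof -
  have l: "ln (exp X / \<alpha>') = X - ln \<alpha>'" using a by (subst ln_divide_pos) auto
  have "(exp X / \<alpha>') powr e = exp (e * ln (exp X / \<alpha>'))" using a by (simp add: powr_def)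
  also have "\<dots> = exp (e * X - e * ln \<alpha>')" unfolding l by (simp add: algebra_simps)
  finally show ?thesis .
qed

locale mc =
  fixes M :: "'a measure" and F :: "real \<Rightarrow> 'a measure" and B :: "real \<Rightarrow> 'a \<Rightarrow> real"
    and T r \<mu> \<sigma> \<rho> m0 m1 \<kappa> \<delta> \<alpha> I fI t h :: real
  assumes setting: "std_BM_setting M F B"
    and T: "T > 0" and r: "r > 0" and \<sigma>: "\<sigma> > 0" and \<rho>: "\<rho> > 0" and m0: "m0 \<ge> 0" and m1: "m1 \<ge> 0"
    and \<kappa>: "\<kappa> > 0" and \<delta>: "\<delta> > 0" and \<alpha>0: "0 < \<alpha>" and \<alpha>1: "\<alpha> < 1" and I: "I > 0" and fI: "fI > 0"
    and t0: "0 \<le> t" and tT: "t < T" and h: "h > 0"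
begin

abbreviation "\<theta> \<equiv> theta r \<mu> \<sigma>"
definition "p = \<alpha> / (\<alpha> - 1)"
definition "CC = (1 - \<alpha>) * exp (- p * ln \<alpha>)"
definition "c1 = p * (\<rho> - r) - \<rho> - p * \<theta>\<^sup>2 / 2 + p\<^sup>2 * \<theta>\<^sup>2 / 2"

sublocale D: detp m0 m1 \<kappa> \<delta> fI CC "p - 1" c1
  using m1 \<kappa> \<delta> fI by unfold_locales auto

lemma p_neg: "p < 0" unfolding p_def using \<alpha>0 \<alpha>1 by (simp add: divide_pos_neg)

lemma CC_pos: "CC > 0" unfolding CC_def using \<alpha>1 by simp

abbreviation "WW \<equiv> W M B T r \<mu> \<sigma> \<rho> m0 m1 \<kappa> \<delta> \<alpha> fI"

lemma H2_eq: "H2 \<delta> fI t' k u = D.\<eta> k (u - t')"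
  unfolding H2_def D.\<eta>_def by simp

lemma int_shift_const:
  assumes "k > 0" "t' \<le> s"
  shows "integral {t'..s} (\<lambda>u. c0 + MH m0 m1 \<kappa> (H2 \<delta> fI t' k u)) = c0 * (s - t') + D.\<Psi> k (s - t')"
proof -
  have cMH: "continuous_on {0..s - t'} (\<lambda>v. MH m0 m1 \<kappa> (D.\<eta> k v))"
    using cont_slice[OF D.cont_MH_\<eta>, of k "{0..s-t'}"] assms by auto
  have cMH2: "continuous_on {t'..s} (\<lambda>u. MH m0 m1 \<kappa> (D.\<eta> k (u - t')))"
    by (rule continuous_on_compose2[OF cMH, of _ "\<lambda>u. u - t'", unfolded o_def]) (auto intro!: continuous_intros)
  have "integral {t'..s} (\<lambda>u. c0 + MH m0 m1 \<kappa> (H2 \<delta> fI t' k u))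
      = integral {t'..s} (\<lambda>u. c0) + integral {t'..s} (\<lambda>u. MH m0 m1 \<kappa> (D.\<eta> k (u - t')))"
    unfolding H2_eq by (rule integral_add) (auto intro!: integrable_continuous_interval cMH2)
  also have "integral {t'..s} (\<lambda>u. MH m0 m1 \<kappa> (D.\<eta> k (u - t'))) = D.\<Psi> k (s - t')"
  proof -
    have "integral {t'..s} ((\<lambda>v. MH m0 m1 \<kappa> (D.\<eta> k v)) \<circ> (\<lambda>x. x + - t')) = integral {t' + - t'..s + - t'} (\<lambda>v. MH m0 m1 \<kappa> (D.\<eta> k v))"
      by (rule integral_shift) (use cMH in simp)
    then show ?thesis unfolding D.\<Psi>_def by (simp add: o_def)
  qed
  finally show ?thesis using assms by simp
qed


lemma E1_eq:
  assumes "k > 0" "t' \<le> s"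
  shows "exp (- integral {t'..s} (\<lambda>u. \<rho> + MH m0 m1 \<kappa> (H2 \<delta> fI t' k u)))
          * u_hat \<alpha> (Z2 r \<mu> \<sigma> \<rho> m0 m1 \<kappa> \<delta> fI B t' 1 k s \<omega>) (H2 \<delta> fI t' k s)
       = (D.Fk k (s - t') * exp (- (p\<^sup>2 * \<theta>\<^sup>2 / 2) * (s - t'))) * exp ((- p * \<theta>) * (B s \<omega> - B t' \<omega>))"
proof -
  define x where "x = s - t'"
  define \<Psi> where "\<Psi> = D.\<Psi> k x"
  define \<eta> where "\<eta> = D.\<eta> k x"
  define dB where "dB = B s \<omega> - B t' \<omega>"
  have i1: "integral {t'..s} (\<lambda>u. \<rho> + MH m0 m1 \<kappa> (H2 \<delta> fI t' k u)) = \<rho> * x + \<Psi>"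
    using int_shift_const[OF assms, of \<rho>] unfolding x_def \<Psi>_def .
  have i2: "integral {t'..s} (\<lambda>u. \<rho> - r + MH m0 m1 \<kappa> (H2 \<delta> fI t' k u)) = (\<rho> - r) * x + \<Psi>"
    using int_shift_const[OF assms, of "\<rho> - r"] unfolding x_def \<Psi>_def .
  define X where "X = (\<rho> - r) * x + \<Psi> - \<theta>\<^sup>2 / 2 * x - \<theta> * dB"
  have Z: "Z2 r \<mu> \<sigma> \<rho> m0 m1 \<kappa> \<delta> fI B t' 1 k s \<omega> = exp X"
    unfolding Z2_def i2 X_def x_def dB_def by simp
  have H: "H2 \<delta> fI t' k s = \<eta>" unfolding H2_eq \<eta>_def x_def ..
  have "exp (- integral {t'..s} (\<lambda>u. \<rho> + MH m0 m1 \<kappa> (H2 \<delta> fI t' k u)))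
          * u_hat \<alpha> (Z2 r \<mu> \<sigma> \<rho> m0 m1 \<kappa> \<delta> fI B t' 1 k s \<omega>) (H2 \<delta> fI t' k s)
        = (1 - \<alpha>) * \<eta> * (exp (- (\<rho> * x + \<Psi>)) * exp (p * X - p * ln \<alpha>))"
    unfolding i1 Z H u_hat_def p_def[symmetric] powr_exp_div[OF \<alpha>0] by simp
  also have "\<dots> = (1 - \<alpha>) * \<eta> * exp ((- (\<rho> * x + \<Psi>)) + (p * X - p * ln \<alpha>))"
    by (simp add: exp_add)
  also have "(- (\<rho> * x + \<Psi>)) + (p * X - p * ln \<alpha>)
      = (- p * ln \<alpha>) + ((p - 1) * \<Psi> + c1 * x) + (- (p\<^sup>2 * \<theta>\<^sup>2 / 2) * x) + (- p * \<theta>) * dB"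
    unfolding X_def c1_def by (simp add: algebra_simps power2_eq_square)
  also have "(1 - \<alpha>) * \<eta> * exp ((- p * ln \<alpha>) + ((p - 1) * \<Psi> + c1 * x) + (- (p\<^sup>2 * \<theta>\<^sup>2 / 2) * x) + (- p * \<theta>) * dB)
      = (CC * \<eta> * exp ((p - 1) * \<Psi> + c1 * x) * exp (- (p\<^sup>2 * \<theta>\<^sup>2 / 2) * x)) * exp ((- p * \<theta>) * dB)"
    unfolding CC_def exp_add by (simp add: algebra_simps)
  finally show ?thesis unfolding D.Fk_def x_def \<Psi>_def \<eta>_def dB_def .
qed


lemma Fk_nonneg: "k > 0 \<Longrightarrow> x \<ge> 0 \<Longrightarrow> D.Fk k x \<ge> 0"
  unfolding D.Fk_def using CC_pos D.\<eta>_pos[of k x] by simp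

lemma cont_Fk_shift:
  assumes "k > 0" "t' \<le> T'"
  shows "continuous_on {t'..T'} (\<lambda>s. D.Fk k (s - t'))"
proof -
  have "continuous_on {0..T' - t'} (D.Fk k)"
    using cont_slice[OF D.cont_Fk, of k "{0..T'-t'}"] assms by auto
  then show ?thesis
    by (rule continuous_on_compose2[of _ _ _ "\<lambda>s. s - t'", unfolded o_def]) (auto intro!: continuous_intros)
qed

lemma W_formula:
  assumes t': "0 \<le> t'" "t' \<le> T" and k: "k > 0"
  shows "WW t' 1 k = integral {0..T - t'} (D.Fk k)"
proof -
  define G where "G s = D.Fk k (s - t') * exp (- (p\<^sup>2 * \<theta>\<^sup>2 / 2) * (s - t'))" for s
  define c where "c = - p * \<theta>"
  have eqi: "integral {t'..T} (\<lambda>s. exp (- integral {t'..s} (\<lambda>u. \<rho> + MH m0 m1 \<kappa> (H2 \<delta> fI t' k u)))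
          * u_hat \<alpha> (Z2 r \<mu> \<sigma> \<rho> m0 m1 \<kappa> \<delta> fI B t' 1 k s \<omega>) (H2 \<delta> fI t' k s))
        = integral {t'..T} (\<lambda>s. G s * exp (c * (B s \<omega> - B t' \<omega>)))" for \<omega>
    by (rule integral_cong) (use E1_eq[OF k] in \<open>auto simp: G_def c_def\<close>)
  have cG: "continuous_on {t'..T} G" unfolding G_def
    by (intro continuous_intros cont_Fk_shift k t')
  have G0: "0 \<le> G s" if "s \<in> {t'..T}" for s
    unfolding G_def using Fk_nonneg[OF k, of "s - t'"] that by simp
  have "WW t' 1 k = integral\<^sup>L M (\<lambda>\<omega>. integral {t'..T} (\<lambda>s. G s * exp (c * (B s \<omega> - B t' \<omega>))))"
    unfolding W_def eqi ..
  also have "\<dots> = integral {t'..T} (\<lambda>s. G s * exp (c\<^sup>2 * (s - t') / 2))"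
    by (rule tonelli_gauss(3)[OF setting t' cG G0])
  also have "\<dots> = integral {t'..T} (\<lambda>s. D.Fk k (s - t'))"
  proof (rule integral_cong)
    fix s
    have "exp (- (p\<^sup>2 * \<theta>\<^sup>2 / 2) * (s - t')) * exp (c\<^sup>2 * (s - t') / 2) = 1"
      unfolding c_def exp_add[symmetric] by (simp add: power_mult_distrib)
    then show "G s * exp (c\<^sup>2 * (s - t') / 2) = D.Fk k (s - t')"
      unfolding G_def by (simp add: mult.assoc)
  qed
  also have "\<dots> = integral {0..T - t'} (D.Fk k)"
  proof -
    have "integral {t'..T} (D.Fk k \<circ> (\<lambda>x. x + - t')) = integral {t' + - t'..T + - t'} (D.Fk k)"
      by (rule integral_shift) (use cont_slice[OF D.cont_Fk, of k "{0..T-t'}"] k in auto)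
    then show ?thesis by (simp add: o_def)
  qed
  finally show ?thesis .
qed

lemma W_scale:
  assumes "z > 0"
  shows "WW t' z k = z powr p * WW t' 1 k"
proof -
  have u: "u_hat \<alpha> (Z2 r \<mu> \<sigma> \<rho> m0 m1 \<kappa> \<delta> fI B t' z k s \<omega>) H
        = z powr p * u_hat \<alpha> (Z2 r \<mu> \<sigma> \<rho> m0 m1 \<kappa> \<delta> fI B t' 1 k s \<omega>) H" for s \<omega> H
    unfolding u_hat_def Z2_def p_def[symmetric]
    by (simp add: powr_mult times_divide_eq_right[symmetric] del: times_divide_eq_right)
  show ?thesis
    unfolding W_def u mult.left_commute[of _ "z powr p"]
    using integral_cmul[where c="z powr p", unfolded real_scaleR_def] by simp
qed

lemma W_h_eq:
  assumes t': "0 \<le> t'" "t' \<le> T" and k: "k > 0" and z: "z > 0"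
  shows "W_h M B T r \<mu> \<sigma> \<rho> m0 m1 \<kappa> \<delta> \<alpha> fI t' z k = z powr p * integral {0..T - t'} (D.Fk' k)"
proof -
  have d: "((\<lambda>k. WW t' 1 k) has_field_derivative integral {0..T - t'} (D.Fk' k)) (at k)"
    by (rule has_field_derivative_transform_within_open[OF D.deriv_V[OF k] _ _ W_formula[OF t', symmetric], of "{0<..}"])
       (use k t' in auto)
  have "((\<lambda>k. WW t' z k) has_field_derivative z powr p * integral {0..T - t'} (D.Fk' k)) (at k)"
    unfolding W_scale[OF z] by (rule DERIV_cmult[OF d])
  then show ?thesis unfolding W_h_def by (rule DERIV_imp_deriv)
qed

end



context mc
begin

definition "L = T - t"
definition "eint s = integral {0..s} (\<lambda>u. \<rho> + MH m0 m1 \<kappa> (H1 \<delta> h u))"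
definition "Dd s = integral {0..L - s} (D.Fk' (H1 \<delta> h s))"
definition "A1 s = I * exp (- r * s - \<theta>\<^sup>2 / 2 * s)"
definition "A2 s = exp (- eint s) * fI * Dd s * exp (p * (- (r + \<theta>\<^sup>2 / 2) * s + eint s))"
definition "gexp z s \<omega> = z * A1 s * exp (- \<theta> * B s \<omega>) - z powr p * A2 s * exp ((- p * \<theta>) * B s \<omega>)"

definition "gJ z s \<omega> = I * z * exp (- r * s - theta r \<mu> \<sigma> * B s \<omega> - (theta r \<mu> \<sigma>)\<^sup>2 / 2 * s)
         - exp (- integral {0..s} (\<lambda>u. \<rho> + MH m0 m1 \<kappa> (H1 \<delta> h u))) * fI
           * W_h M B T r \<mu> \<sigma> \<rho> m0 m1 \<kappa> \<delta> \<alpha> fI (t + s)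
               (Z1 r \<mu> \<sigma> \<rho> m0 m1 \<kappa> \<delta> B z h s \<omega>) (H1 \<delta> h s)"

lemma L_pos: "L > 0" unfolding L_def using tT by simp

lemma H1_pos: "H1 \<delta> h s > 0" unfolding H1_def using h by simp

lemma powr_exp': "exp (x::real) powr y = exp (y * x)"
  by (simp add: powr_def)

lemma g_eq:
  assumes z: "z > 0" and s: "s \<in> {0..L}"
  shows "gJ z s \<omega> = gexp z s \<omega>"
proof -
  define E where "E = - (r + \<theta>\<^sup>2 / 2) * s - \<theta> * B s \<omega> + eint s"
  have Z1: "Z1 r \<mu> \<sigma> \<rho> m0 m1 \<kappa> \<delta> B z h s \<omega> = z * exp E"
    unfolding Z1_def E_def eint_def ..
  have Wh: "W_h M B T r \<mu> \<sigma> \<rho> m0 m1 \<kappa> \<delta> \<alpha> fI (t + s) (Z1 r \<mu> \<sigma> \<rho> m0 m1 \<kappa> \<delta> B z h s \<omega>) (H1 \<delta> h s)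
      = (z * exp E) powr p * Dd s"
    unfolding Z1 Dd_def using W_h_eq[of "t + s" "H1 \<delta> h s" "z * exp E"] s t0 z H1_pos
    by (simp add: L_def algebra_simps)
  have e1: "exp (- r * s - \<theta> * B s \<omega> - \<theta>\<^sup>2 / 2 * s) = exp (- r * s - \<theta>\<^sup>2 / 2 * s) * exp (- \<theta> * B s \<omega>)"
    by (simp add: exp_add[symmetric] algebra_simps)
  have e2: "(z * exp E) powr p = z powr p * (exp (p * (- (r + \<theta>\<^sup>2 / 2) * s + eint s)) * exp ((- p * \<theta>) * B s \<omega>))"
    unfolding powr_mult powr_exp' E_def by (simp add: exp_add[symmetric] algebra_simps)
  show ?thesis
    unfolding gJ_def gexp_def Wh e1 e2 A1_def A2_def eint_def[symmetric]
    by (simp add: algebra_simps)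
qed


lemma cont_MH_H1: "continuous_on S (\<lambda>u. \<rho> + MH m0 m1 \<kappa> (H1 \<delta> h u))"
  unfolding MH_def H1_def using h by (intro continuous_intros) auto

lemma cont_eint: "continuous_on {0..L} eint"
  unfolding eint_def
  by (rule indefinite_integral_continuous_1[OF integrable_continuous_interval[OF cont_MH_H1]])

lemma cont_Dd: "continuous_on {0..L} Dd"
proof -
  have c: "continuous_on ({0<..} \<times> {0..L}) (\<lambda>(k,y). integral {0..y} (D.Fk' k))"
    by (rule cont_param_upper[OF D.cont_Fk'])
  have "continuous_on {0..L} (\<lambda>s. (\<lambda>(k,y). integral {0..y} (D.Fk' k)) (H1 \<delta> h s, L - s))"
    by (rule continuous_on_compose2[OF c]) (auto simp: H1_def h intro!: continuous_intros)
  then show ?thesis unfolding Dd_def by simp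
qed

lemma Dd_nonneg: "s \<in> {0..L} \<Longrightarrow> Dd s \<ge> 0"
  unfolding Dd_def
proof (rule integral_nonneg)
  assume s: "s \<in> {0..L}"
  show "D.Fk' (H1 \<delta> h s) integrable_on {0..L - s}"
    by (rule integrable_continuous_interval, rule cont_slice[OF D.cont_Fk'[of L]]) (use s H1_pos in auto)
  show "0 \<le> D.Fk' (H1 \<delta> h s) x" if "x \<in> {0..L - s}" for x
    using that D.Fk'_nonneg[of "H1 \<delta> h s" x] CC_pos p_neg H1_pos by auto
qed

lemma cont_A1: "continuous_on S A1" unfolding A1_def by (intro continuous_intros)
lemma cont_A2: "continuous_on {0..L} A2" unfolding A2_def by (intro continuous_intros cont_eint cont_Dd)
lemma A1_nonneg: "A1 s \<ge> 0" unfolding A1_def using I by simp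
lemma A2_nonneg: "s \<in> {0..L} \<Longrightarrow> A2 s \<ge> 0" unfolding A2_def using fI Dd_nonneg by simp


lemma Bm: "0 \<le> s \<Longrightarrow> B s \<in> borel_measurable M"
  using setting_facts(2)[OF setting] .

lemma cont_B: "\<omega> \<in> space M \<Longrightarrow> continuous_on {0..L} (\<lambda>s. B s \<omega>)"
  using setting_facts(4)[OF setting] by (rule continuous_on_subset) auto

lemma cont_gexp: "\<omega> \<in> space M \<Longrightarrow> continuous_on {0..L} (\<lambda>s. gexp z s \<omega>)"
  unfolding gexp_def by (intro continuous_intros cont_A1 cont_A2 cont_B)

lemma Phi_meas:
  assumes tau: "stopping_time F \<tau>" "\<And>\<omega>. \<omega> \<in> space M \<Longrightarrow> 0 \<le> \<tau> \<omega> \<and> \<tau> \<omega> \<le> L"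
  shows "(\<lambda>\<omega>. integral {0..\<tau> \<omega>} (\<lambda>s. gexp z s \<omega>)) \<in> borel_measurable M"
proof -
  interpret lb: sigma_finite_measure lborel by (rule sigma_finite_lborel)
  have taum[measurable]: "\<tau> \<in> borel_measurable M"
    by (rule measurable_stopping_time[OF tau(1)]) (use setting_facts[OF setting] in auto)
  define cl where "cl s = max 0 (min L s)" for s
  have cl_in: "cl s \<in> {0..L}" for s using L_pos by (auto simp: cl_def)
  have cl_id: "s \<in> {0..L} \<Longrightarrow> cl s = s" for s by (auto simp: cl_def)
  have cont_cl: "continuous_on UNIV cl" unfolding cl_def by (intro continuous_intros)
  define f' where "f' s \<omega> = gexp z (cl s) \<omega>" for s \<omega>
  have "(\<lambda>(\<omega>,s). f' s \<omega>) \<in> borel_measurable (M \<Otimes>\<^sub>M lborel)"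
  proof (rule carath)
    fix \<omega> assume "\<omega> \<in> space M"
    show "continuous_on UNIV (\<lambda>s. f' s \<omega>)" unfolding f'_def
      by (rule continuous_on_compose2[OF cont_gexp[OF \<open>\<omega> \<in> space M\<close>] cont_cl]) (use cl_in in auto)
  next
    fix s
    have [measurable]: "B (cl s) \<in> borel_measurable M" using cl_in[of s] by (intro Bm) auto
    show "f' s \<in> borel_measurable M" unfolding f'_def gexp_def by measurable
  qed
  then have [measurable]: "(\<lambda>(\<omega>,s). f' s \<omega>) \<in> borel_measurable (M \<Otimes>\<^sub>M lborel)" .
  have m2: "(\<lambda>(\<omega>,s). if 0 \<le> s \<and> s \<le> \<tau> \<omega> then f' s \<omega> else 0) \<in> borel_measurable (M \<Otimes>\<^sub>M lborel)"
    by measurable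
  have m3: "(\<lambda>\<omega>. \<integral>s. (if 0 \<le> s \<and> s \<le> \<tau> \<omega> then f' s \<omega> else 0) \<partial>lborel) \<in> borel_measurable M"
    using m2 by measurable
  show ?thesis
  proof (rule measurable_cong[THEN iffD1, OF _ m3])
    fix \<omega> assume w: "\<omega> \<in> space M"
    have sub: "{0..\<tau> \<omega>} \<subseteq> {0..L}" using tau(2)[OF w] by auto
    have si: "set_integrable lborel {0..\<tau> \<omega>} (\<lambda>s. gexp z s \<omega>)"
      by (rule borel_integrable_atLeastAtMost', rule continuous_on_subset[OF cont_gexp[OF w] sub])
    have "integral {0..\<tau> \<omega>} (\<lambda>s. gexp z s \<omega>) = (LINT s : {0..\<tau> \<omega>} | lborel. gexp z s \<omega>)"
      using set_borel_integral_eq_integral(2)[OF si] by simp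
    also have "\<dots> = (\<integral>s. (if 0 \<le> s \<and> s \<le> \<tau> \<omega> then f' s \<omega> else 0) \<partial>lborel)"
      unfolding set_lebesgue_integral_def
      by (rule Bochner_Integration.integral_cong) (use sub in \<open>auto simp: f'_def cl_id indicator_def\<close>)
    finally show "(\<integral>s. (if 0 \<le> s \<and> s \<le> \<tau> \<omega> then f' s \<omega> else 0) \<partial>lborel) = integral {0..\<tau> \<omega>} (\<lambda>s. gexp z s \<omega>)"
      by simp
  qed
qed


lemma Phi_int:
  assumes tau: "stopping_time F \<tau>" "\<And>\<omega>. \<omega> \<in> space M \<Longrightarrow> 0 \<le> \<tau> \<omega> \<and> \<tau> \<omega> \<le> L"
    and z: "z > 0"
  shows "integrable M (\<lambda>\<omega>. integral {0..\<tau> \<omega>} (\<lambda>s. gexp z s \<omega>))"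
proof -
  define G1 where "G1 s = z * A1 s" for s
  define G2 where "G2 s = z powr p * A2 s" for s
  have cG1: "continuous_on {0..L} G1" unfolding G1_def by (intro continuous_intros cont_A1)
  have cG2: "continuous_on {0..L} G2" unfolding G2_def by (intro continuous_intros cont_A2)
  have G1n: "s \<in> {0..L} \<Longrightarrow> 0 \<le> G1 s" for s unfolding G1_def using z A1_nonneg by simp
  have G2n: "s \<in> {0..L} \<Longrightarrow> 0 \<le> G2 s" for s unfolding G2_def using A2_nonneg by simp
  define \<Lambda>1 where "\<Lambda>1 \<omega> = integral {0..L} (\<lambda>s. G1 s * exp ((- \<theta>) * (B s \<omega> - B 0 \<omega>)))" for \<omega>
  define \<Lambda>2 where "\<Lambda>2 \<omega> = integral {0..L} (\<lambda>s. G2 s * exp ((- p * \<theta>) * (B s \<omega> - B 0 \<omega>)))" for \<omega>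
  have i1: "integrable M \<Lambda>1" unfolding \<Lambda>1_def
    by (rule tonelli_gauss(2)[OF setting _ _ cG1 G1n]) (use L_pos in auto)
  have i2: "integrable M \<Lambda>2" unfolding \<Lambda>2_def
    by (rule tonelli_gauss(2)[OF setting _ _ cG2 G2n]) (use L_pos in auto)
  have bnd: "AE \<omega> in M. norm (integral {0..\<tau> \<omega>} (\<lambda>s. gexp z s \<omega>)) \<le> norm (\<Lambda>1 \<omega> + \<Lambda>2 \<omega>)"
  proof (rule AE_I2)
    fix \<omega> assume w: "\<omega> \<in> space M"
    have B0: "B 0 \<omega> = 0" using setting_facts(3)[OF setting w] .
    define b where "b s = G1 s * exp ((- \<theta>) * B s \<omega>) + G2 s * exp ((- p * \<theta>) * B s \<omega>)" for s
    have cb: "continuous_on {0..L} b" unfolding b_def by (intro continuous_intros cG1 cG2 cont_B w)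
    have bn: "s \<in> {0..L} \<Longrightarrow> 0 \<le> b s" for s unfolding b_def using G1n G2n by (simp add: add_nonneg_nonneg)
    have sub: "{0..\<tau> \<omega>} \<subseteq> {0..L}" using tau(2)[OF w] by auto
    have "norm (integral {0..\<tau> \<omega>} (\<lambda>s. gexp z s \<omega>)) \<le> integral {0..\<tau> \<omega>} b"
    proof (rule integral_norm_bound_integral)
      show "(\<lambda>s. gexp z s \<omega>) integrable_on {0..\<tau> \<omega>}"
        by (rule integrable_continuous_interval, rule continuous_on_subset[OF cont_gexp[OF w] sub])
      show "b integrable_on {0..\<tau> \<omega>}"
        by (rule integrable_continuous_interval, rule continuous_on_subset[OF cb sub])
      fix s assume "s \<in> {0..\<tau> \<omega>}"
      then have s: "s \<in> {0..L}" using sub by auto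
      have "0 \<le> G1 s * exp ((- \<theta>) * B s \<omega>)" "0 \<le> G2 s * exp ((- p * \<theta>) * B s \<omega>)"
        using G1n[OF s] G2n[OF s] by auto
      then show "norm (gexp z s \<omega>) \<le> b s"
        unfolding gexp_def b_def G1_def G2_def by (simp add: mult.assoc)
    qed
    also have "\<dots> \<le> integral {0..L} b"
      by (rule integral_subset_le[OF sub]) (use integrable_continuous_interval[OF cb] 
           integrable_continuous_interval[OF continuous_on_subset[OF cb sub]] bn in auto)
    also have "\<dots> = \<Lambda>1 \<omega> + \<Lambda>2 \<omega>"
      unfolding b_def \<Lambda>1_def \<Lambda>2_def B0 diff_zero
      by (rule integral_add; rule integrable_continuous_interval; intro continuous_intros cG1 cG2 cont_B w)
    also have "\<dots> \<le> norm (\<Lambda>1 \<omega> + \<Lambda>2 \<omega>)" by simp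
    finally show "norm (integral {0..\<tau> \<omega>} (\<lambda>s. gexp z s \<omega>)) \<le> norm (\<Lambda>1 \<omega> + \<Lambda>2 \<omega>)" .
  qed
  have ia: "integrable M (\<lambda>\<omega>. \<Lambda>1 \<omega> + \<Lambda>2 \<omega>)" using i1 i2 by (rule Bochner_Integration.integrable_add)
  show ?thesis
    by (rule Bochner_Integration.integrable_bound[OF ia Phi_meas[OF tau] bnd])
qed

lemma Phi_mono:
  assumes w: "\<omega> \<in> space M" and tw: "0 \<le> \<tau>w" "\<tau>w \<le> L" and z: "0 < z1" "z1 \<le> z2"
  shows "integral {0..\<tau>w} (\<lambda>s. gexp z1 s \<omega>) \<le> integral {0..\<tau>w} (\<lambda>s. gexp z2 s \<omega>)"
proof (rule integral_le)
  have sub: "{0..\<tau>w} \<subseteq> {0..L}" using tw by auto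
  show "(\<lambda>s. gexp z1 s \<omega>) integrable_on {0..\<tau>w}" "(\<lambda>s. gexp z2 s \<omega>) integrable_on {0..\<tau>w}"
    by (rule integrable_continuous_interval, rule continuous_on_subset[OF cont_gexp[OF w] sub])+
  fix s assume "s \<in> {0..\<tau>w}"
  then have s: "s \<in> {0..L}" using sub by auto
  have a: "z1 * (A1 s * exp (- \<theta> * B s \<omega>)) \<le> z2 * (A1 s * exp (- \<theta> * B s \<omega>))"
    by (rule mult_right_mono) (use z A1_nonneg in auto)
  have pw: "z2 powr p \<le> z1 powr p" by (rule powr_mono2') (use z p_neg in auto)
  have b: "z2 powr p * (A2 s * exp ((- p * \<theta>) * B s \<omega>)) \<le> z1 powr p * (A2 s * exp ((- p * \<theta>) * B s \<omega>))"
    by (rule mult_right_mono[OF pw]) (use A2_nonneg[OF s] in auto)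
  show "gexp z1 s \<omega> \<le> gexp z2 s \<omega>"
    unfolding gexp_def using a b by (simp add: mult.assoc)
qed

end



theorem proposition4p2:
  fixes M :: "'a measure" and F :: "real \<Rightarrow> 'a measure" and B :: "real \<Rightarrow> 'a \<Rightarrow> real"
    and T r \<mu> \<sigma> \<rho> m0 m1 \<kappa> \<delta> \<alpha> I fI t h :: real
  assumes setting: "std_BM_setting M F B"
    and "T > 0" and "r > 0" and "\<sigma> > 0" and "\<rho> > 0" and "m0 \<ge> 0" and "m1 \<ge> 0"
    and "\<kappa> > 0" and "\<delta> > 0" and "0 < \<alpha>" and "\<alpha> < 1" and "I > 0" and "fI > 0"
    and "0 \<le> t" and "t < T" and "h > 0"
  shows "mono_on {0<..} (\<lambda>z. J_hat M F B T r \<mu> \<sigma> \<rho> m0 m1 \<kappa> \<delta> \<alpha> I fI t z h)"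
proof -
  interpret mc M F B T r \<mu> \<sigma> \<rho> m0 m1 \<kappa> \<delta> \<alpha> I fI t h
    by unfold_locales (use assms in auto)
  show ?thesis
  proof (rule mono_onI)
    fix z1 z2 :: real assume z1: "z1 \<in> {0<..}" and z2: "z2 \<in> {0<..}" and le: "z1 \<le> z2"
    show "J_hat M F B T r \<mu> \<sigma> \<rho> m0 m1 \<kappa> \<delta> \<alpha> I fI t z1 h \<le> J_hat M F B T r \<mu> \<sigma> \<rho> m0 m1 \<kappa> \<delta> \<alpha> I fI t z2 h"
      unfolding J_hat_def gJ_def[symmetric]
    proof (rule SUP_mono)
      fix \<tau> assume "\<tau> \<in> stopping_times_upto M F (T - t)"
      then have tau: "stopping_time F \<tau>" "\<And>\<omega>. \<omega> \<in> space M \<Longrightarrow> 0 \<le> \<tau> \<omega> \<and> \<tau> \<omega> \<le> L"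
        unfolding stopping_times_upto_def L_def by auto
      have eq: "(\<integral>\<omega>. integral {0..\<tau> \<omega>} (\<lambda>s. gJ z s \<omega>) \<partial>M) = (\<integral>\<omega>. integral {0..\<tau> \<omega>} (\<lambda>s. gexp z s \<omega>) \<partial>M)"
        if z: "z > 0" for z
      proof (rule Bochner_Integration.integral_cong[OF refl])
        fix \<omega> assume w: "\<omega> \<in> space M"
        show "integral {0..\<tau> \<omega>} (\<lambda>s. gJ z s \<omega>) = integral {0..\<tau> \<omega>} (\<lambda>s. gexp z s \<omega>)"
          by (rule integral_cong, rule g_eq[OF z]) (use tau(2)[OF w] in auto)
      qed
      have "(\<integral>\<omega>. integral {0..\<tau> \<omega>} (\<lambda>s. gexp z1 s \<omega>) \<partial>M) \<le> (\<integral>\<omega>. integral {0..\<tau> \<omega>} (\<lambda>s. gexp z2 s \<omega>) \<partial>M)"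
      proof (rule Bochner_Integration.integral_mono)
        show "integrable M (\<lambda>\<omega>. integral {0..\<tau> \<omega>} (\<lambda>s. gexp z1 s \<omega>))"
          using Phi_int[OF tau, of z1] z1 by simp
        show "integrable M (\<lambda>\<omega>. integral {0..\<tau> \<omega>} (\<lambda>s. gexp z2 s \<omega>))"
          using Phi_int[OF tau, of z2] z2 by simp
        fix \<omega> assume w: "\<omega> \<in> space M"
        show "integral {0..\<tau> \<omega>} (\<lambda>s. gexp z1 s \<omega>) \<le> integral {0..\<tau> \<omega>} (\<lambda>s. gexp z2 s \<omega>)"
          by (rule Phi_mono[OF w]) (use z1 le tau(2)[OF w] in auto)
      qed
      then have "ereal (\<integral>\<omega>. integral {0..\<tau> \<omega>} (\<lambda>s. gJ z1 s \<omega>) \<partial>M) \<le> ereal (\<integral>\<omega>. integral {0..\<tau> \<omega>} (\<lambda>s. gJ z2 s \<omega>) \<partial>M)"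
        using eq[of z1] eq[of z2] z1 z2 by simp
      then show "\<exists>m\<in>stopping_times_upto M F (T - t). ereal (\<integral>\<omega>. integral {0..\<tau> \<omega>} (\<lambda>s. gJ z1 s \<omega>) \<partial>M) \<le> ereal (\<integral>\<omega>. integral {0..m \<omega>} (\<lambda>s. gJ z2 s \<omega>) \<partial>M)"
        using \<open>\<tau> \<in> stopping_times_upto M F (T - t)\<close> by blast
    qed
  qed
qed


end
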